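(* Let $T$ be an oriented tree and $U=\{v\in V(T):\deg^-_T(v)\geq 2\}$. Suppose that $T$ is grounded, that the minimal subtree of $T$ containing $U$ is an out-arborescence, that $|U|\geq 2$, and that $T$ has no leaf of in-degree $1$. Then there exist integers $k\ge 1$ and $\ell\ge 1$ such that $T$ is isomorphic to a subgraph of $T(k,\ell)$.
   Context: An oriented tree is an orientation of an undirected tree. For an oriented tree $T$, a height function $h_T\colon V(T)\to\mathbb{Z}$ satisfies $h_T(v)=h_T(u)+1$ for every edge $(u,v)\in E(T)$ (unique up to an additive constant); $T$ is grounded if $h_T$ is constant on the vertices of in-degree at least $2$. An out-arborescence is an oriented tree with all edges oriented away from a designated root. $B^+_{k,\ell}$ is the complete $\ell$-ary tree of depth $k$ (distance from root to leaves $k$) with all edges oriented away from the root. $S^-_{k,\ell}$ is the $(k-1)$-subdivision of the in-star with $\ell$ leaves: a centre vertex together with $\ell$ directed paths of length $k$ ending at the centre, pairwise sharing only the centre. $T(k,\ell)$ is the oriented tree obtained from $B^+_{k,\ell}$ by identifying each leaf with the centre of a new (disjoint) copy of $S^-_{k,\ell}$. *)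

theory Defs
  imports Main
begin

definition und :: "('a \<times> 'a) set \<Rightarrow> ('a \<times> 'a) set" where
  "und E = E \<union> E\<inverse>"

definition induced :: "'a set \<Rightarrow> ('a \<times> 'a) set \<Rightarrow> ('a \<times> 'a) set" where
  "induced W E = E \<inter> (W \<times> W)"

definition und_connected :: "'a set \<Rightarrow> ('a \<times> 'a) set \<Rightarrow> bool" where
  "und_connected V E \<longleftrightarrow> (\<forall>u\<in>V. \<forall>v\<in>V. (u, v) \<in> (und E)\<^sup>*)"

definition oriented_tree :: "'a set \<Rightarrow> ('a \<times> 'a) set \<Rightarrow> bool" where
  "oriented_tree V E \<longleftrightarrow> finite V \<and> V \<noteq> {} \<and> E \<subseteq> V \<times> V
     \<and> (\<forall>v. (v, v) \<notin> E) \<and> (\<forall>u v. (u, v) \<in> E \<longrightarrow> (v, u) \<notin> E)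
     \<and> und_connected V E \<and> card E + 1 = card V"

definition indeg :: "'a set \<Rightarrow> ('a \<times> 'a) set \<Rightarrow> 'a \<Rightarrow> nat" where
  "indeg V E v = card {u \<in> V. (u, v) \<in> E}"

definition outdeg :: "'a set \<Rightarrow> ('a \<times> 'a) set \<Rightarrow> 'a \<Rightarrow> nat" where
  "outdeg V E v = card {w \<in> V. (v, w) \<in> E}"

definition is_leaf :: "'a set \<Rightarrow> ('a \<times> 'a) set \<Rightarrow> 'a \<Rightarrow> bool" where
  "is_leaf V E v \<longleftrightarrow> v \<in> V \<and> indeg V E v + outdeg V E v = 1"

definition branch_verts :: "'a set \<Rightarrow> ('a \<times> 'a) set \<Rightarrow> 'a set" where
  "branch_verts V E = {v \<in> V. indeg V E v \<ge> 2}"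

definition height_fun :: "('a \<times> 'a) set \<Rightarrow> ('a \<Rightarrow> int) \<Rightarrow> bool" where
  "height_fun E h \<longleftrightarrow> (\<forall>(u, v) \<in> E. h v = h u + 1)"

text \<open>Grounded: a height function is constant on the vertices of in-degree at least 2
  (height functions are unique up to an additive constant, so "some" = "every").\<close>
definition grounded :: "'a set \<Rightarrow> ('a \<times> 'a) set \<Rightarrow> bool" where
  "grounded V E \<longleftrightarrow> (\<exists>h. height_fun E h \<and>
      (\<forall>u \<in> branch_verts V E. \<forall>w \<in> branch_verts V E. h u = h w))"

definition min_subtree_verts :: "'a set \<Rightarrow> ('a \<times> 'a) set \<Rightarrow> 'a set \<Rightarrow> 'a set" where
  "min_subtree_verts V E U =
     \<Inter> {W. U \<subseteq> W \<and> W \<subseteq> V \<and> und_connected W (induced W E)}"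

definition out_arborescence :: "'a set \<Rightarrow> ('a \<times> 'a) set \<Rightarrow> bool" where
  "out_arborescence V E \<longleftrightarrow> oriented_tree V E \<and> (\<exists>r \<in> V. \<forall>v \<in> V. (r, v) \<in> E\<^sup>*)"

definition subgraph_iso :: "'a set \<Rightarrow> ('a \<times> 'a) set \<Rightarrow> 'b set \<Rightarrow> ('b \<times> 'b) set \<Rightarrow> bool" where
  "subgraph_iso V E V' E' \<longleftrightarrow> (\<exists>f. inj_on f V \<and> f ` V \<subseteq> V' \<and>
      (\<forall>(u, v) \<in> E. (f u, f v) \<in> E'))"

text \<open>Vertex (xs,0,0) with xs a word over {0..<l} of length \<le> k is the
  vertex xs of B^+_{k,l} (root = []). For a leaf w (length k), vertex (w,j,t) with j<l,
  1 \<le> t \<le> k is the vertex at distance t from the centre w on the j-th in-path of the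
  copy of S^-_{k,l} attached at w.\<close>
definition Tk_verts :: "nat \<Rightarrow> nat \<Rightarrow> (nat list \<times> nat \<times> nat) set" where
  "Tk_verts k l =
     {(xs, 0, 0) | xs. length xs \<le> k \<and> set xs \<subseteq> {..<l}}
   \<union> {(w, j, t) | w j t. length w = k \<and> set w \<subseteq> {..<l} \<and> j < l \<and> 1 \<le> t \<and> t \<le> k}"

definition Tk_edges :: "nat \<Rightarrow> nat \<Rightarrow> ((nat list \<times> nat \<times> nat) \<times> (nat list \<times> nat \<times> nat)) set" where
  "Tk_edges k l =
     {((xs, 0, 0), (xs @ [i], 0, 0)) | xs i. length xs < k \<and> set xs \<subseteq> {..<l} \<and> i < l}
   \<union> {((w, j, Suc t), (w, j, t)) | w j t. length w = k \<and> set w \<subseteq> {..<l} \<and> j < l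
        \<and> 1 \<le> t \<and> Suc t \<le> k}
   \<union> {((w, j, 1), (w, 0, 0)) | w j. length w = k \<and> set w \<subseteq> {..<l} \<and> j < l}"

end

theory Submission
  imports Defs
begin

primrec pwn :: "('a \<Rightarrow> 'a) \<Rightarrow> ('a \<Rightarrow> nat) \<Rightarrow> nat \<Rightarrow> 'a \<Rightarrow> nat list" where
  "pwn p ix 0 v = []"
| "pwn p ix (Suc n) v = pwn p ix n (p v) @ [ix v]"

lemma Tk_B: "length xs \<le> k \<Longrightarrow> set xs \<subseteq> {..<l} \<Longrightarrow> (xs, 0, 0) \<in> Tk_verts k l"
  unfolding Tk_verts_def by blast
lemma Tk_S: "length w = k \<Longrightarrow> set w \<subseteq> {..<l} \<Longrightarrow> j < l \<Longrightarrow> 1 \<le> t \<Longrightarrow> t \<le> k \<Longrightarrow> (w, j, t) \<in> Tk_verts k l"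
  unfolding Tk_verts_def by blast
lemma Te1: "length xs < k \<Longrightarrow> set xs \<subseteq> {..<l} \<Longrightarrow> i < l \<Longrightarrow> ((xs, 0, 0), (xs @ [i], 0, 0)) \<in> Tk_edges k l"
  unfolding Tk_edges_def by blast
lemma Te2: "length w = k \<Longrightarrow> set w \<subseteq> {..<l} \<Longrightarrow> j < l \<Longrightarrow> 1 \<le> t \<Longrightarrow> Suc t \<le> k \<Longrightarrow> ((w, j, Suc t), (w, j, t)) \<in> Tk_edges k l"
  unfolding Tk_edges_def by blast
lemma Te3: "length w = k \<Longrightarrow> set w \<subseteq> {..<l} \<Longrightarrow> j < l \<Longrightarrow> ((w, j, 1), (w, 0, 0)) \<in> Tk_edges k l"
  unfolding Tk_edges_def by blast
lemma rep_snoc: "replicate n (0::nat) @ [0] = replicate (Suc n) 0"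
  by (induction n) auto

locale ctx =
  fixes V :: "'a set" and E :: "('a \<times> 'a) set" and r :: 'a and h :: "'a \<Rightarrow> int"
  assumes tree: "oriented_tree V E"
    and hf: "height_fun E h"
    and ground: "\<forall>u \<in> branch_verts V E. \<forall>w \<in> branch_verts V E. h u = h w"
    and rootR: "\<forall>u \<in> branch_verts V E. (r, u) \<in> E\<^sup>*"
    and rV: "r \<in> V"
    and card2: "card (branch_verts V E) \<ge> 2"
    and leafc: "\<forall>v. is_leaf V E v \<longrightarrow> indeg V E v \<noteq> 1"
begin

abbreviation "U \<equiv> branch_verts V E"

lemma finV: "finite V" using tree by (simp add: oriented_tree_def)
lemma EV: "E \<subseteq> V \<times> V" using tree by (simp add: oriented_tree_def)
lemma finE: "finite E" using finV EV finite_subset by blast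
lemma noloop: "(v, v) \<notin> E" using tree by (simp add: oriented_tree_def)
lemma antisym: "(u, v) \<in> E \<Longrightarrow> (v, u) \<notin> E" using tree by (simp add: oriented_tree_def)
lemma conn: "u \<in> V \<Longrightarrow> v \<in> V \<Longrightarrow> (u, v) \<in> (und E)\<^sup>*"
  using tree by (simp add: oriented_tree_def und_connected_def)
lemma cardE: "card E + 1 = card V" using tree by (simp add: oriented_tree_def)
lemma UV: "U \<subseteq> V" by (auto simp: branch_verts_def)

lemma hE: "(a, b) \<in> E \<Longrightarrow> h b = h a + 1" using hf by (auto simp: height_fun_def)

lemma hpow: "(a, b) \<in> E ^^ n \<Longrightarrow> h b = h a + int n"
proof (induction n arbitrary: b)
  case 0 then show ?case by simp
next
  case (Suc n)
  then obtain y where "(a, y) \<in> E ^^ n" "(y, b) \<in> E" by (meson relpow_Suc_E)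
  then show ?case using Suc hE by fastforce
qed

lemma hstar: "(a, b) \<in> E\<^sup>* \<Longrightarrow> h b \<ge> h a"
proof -
  assume "(a, b) \<in> E\<^sup>*"
  then obtain n where "(a, b) \<in> E ^^ n" using rtrancl_power by blast
  then show ?thesis using hpow by fastforce
qed

lemma hplus: "(a, b) \<in> E\<^sup>* \<Longrightarrow> a \<noteq> b \<Longrightarrow> h b > h a"
proof -
  assume "(a, b) \<in> E\<^sup>*" "a \<noteq> b"
  then obtain n where "(a, b) \<in> E ^^ n" using rtrancl_power by blast
  moreover with \<open>a \<noteq> b\<close> have "n \<noteq> 0" by (cases n) auto
  ultimately show ?thesis using hpow by fastforce
qed

lemma r_notU: "r \<notin> U"
proof
  assume rU: "r \<in> U"
  have "\<not> U \<subseteq> {r}"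
  proof
    assume "U \<subseteq> {r}"
    then have "card U \<le> card {r}" by (intro card_mono) auto
    then show False using card2 by simp
  qed
  then obtain u where u: "u \<in> U" "u \<noteq> r" by blast
  then have "h u > h r" using hplus rootR by blast
  moreover have "h u = h r" using ground rU u by blast
  ultimately show False by simp
qed

lemma U_ne: "U \<noteq> {}" using card2 by (metis card.empty not_numeral_le_zero)

definition "u0 = (SOME u. u \<in> U)"
definition "h0 = h u0"
lemma u0U: "u0 \<in> U" unfolding u0_def using U_ne by (simp add: some_in_eq)
lemma hU: "u \<in> U \<Longrightarrow> h u = h0" unfolding h0_def using ground u0U by blast

lemma sink:
  assumes "z \<in> V" "z \<notin> U" "\<forall>w. (z, w) \<notin> E" "(y, z) \<in> E"
  shows False
proof -
  have "y \<in> V" using assms(4) EV by blast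
  have fin: "finite {u \<in> V. (u, z) \<in> E}" using finV by simp
  have "y \<in> {u \<in> V. (u, z) \<in> E}" using \<open>y \<in> V\<close> assms(4) by simp
  then have "indeg V E z \<ge> 1" unfolding indeg_def using fin
    by (metis One_nat_def Suc_leI card_gt_0_iff empty_iff)
  moreover have "indeg V E z < 2" using assms(1,2) by (auto simp: branch_verts_def)
  ultimately have i1: "indeg V E z = 1" by simp
  have "outdeg V E z = 0" using assms(3) by (simp add: outdeg_def)
  then have "is_leaf V E z" using i1 assms(1) by (simp add: is_leaf_def)
  then show False using leafc i1 by blast
qed

lemma reachU:
  assumes "(a, b) \<in> E"
  shows "\<exists>z \<in> U. (b, z) \<in> E\<^sup>*"
proof -
  define D where "D = {z \<in> V. (b, z) \<in> E\<^sup>*}"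
  have bV: "b \<in> V" using assms EV by blast
  have finD: "finite D" using finV D_def by simp
  have bD: "b \<in> D" using bV D_def by simp
  obtain z where zD: "z \<in> D" and zmax: "\<forall>x \<in> D. h x \<le> h z"
    using finD bD by (metis (mono_tags, lifting) empty_iff finite_imageI image_eqI imageE Max_ge Max_in image_is_empty)
  show ?thesis
  proof (cases "z \<in> U")
    case True then show ?thesis using zD D_def by blast
  next
    case False
    have noout: "\<forall>w. (z, w) \<notin> E"
    proof (intro allI notI)
      fix w assume "(z, w) \<in> E"
      then have "w \<in> D" using zD EV D_def by (auto intro: rtrancl_into_rtrancl)
      then have "h w \<le> h z" using zmax by blast
      then show False using hE \<open>(z, w) \<in> E\<close> by fastforce
    qed
    have "\<exists>y. (y, z) \<in> E"
    proof (cases "z = b")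
      case True then show ?thesis using assms by blast
    next
      case False
      then show ?thesis using zD D_def by (metis (no_types, lifting) mem_Collect_eq rtranclE)
    qed
    then show ?thesis using sink zD D_def False noout by blast
  qed
qed

lemma out_lt: "(v, w) \<in> E \<Longrightarrow> h v < h0"
  using reachU hstar hU hE by fastforce

definition "d v = (LEAST n. (r, v) \<in> (und E) ^^ n)"

lemma und_V: "(x, y) \<in> und E \<Longrightarrow> x \<in> V \<and> y \<in> V"
  using EV by (auto simp: und_def)

lemma d_path: "v \<in> V \<Longrightarrow> (r, v) \<in> (und E) ^^ (d v)"
proof -
  assume "v \<in> V"
  then obtain n where "(r, v) \<in> (und E) ^^ n" using conn rV rtrancl_power by blast
  then show ?thesis unfolding d_def by (rule LeastI)
qed

lemma d_le: "(r, v) \<in> (und E) ^^ n \<Longrightarrow> d v \<le> n"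
  unfolding d_def by (rule Least_le)

lemma d0: "v \<in> V \<Longrightarrow> d v = 0 \<longleftrightarrow> v = r"
proof
  assume "v \<in> V" "d v = 0" then show "v = r" using d_path by fastforce
next
  assume "v = r" then show "d v = 0" using d_le[of r 0] by simp
qed

lemma par_ex: "v \<in> V \<Longrightarrow> v \<noteq> r \<Longrightarrow> \<exists>p. p \<in> V \<and> (p, v) \<in> und E \<and> Suc (d p) = d v"
proof -
  assume vV: "v \<in> V" and vr: "v \<noteq> r"
  then have "d v \<noteq> 0" using d0 by simp
  then obtain m where m: "d v = Suc m" by (cases "d v") auto
  then have "(r, v) \<in> (und E) ^^ Suc m" using d_path vV by metis
  then obtain p where p1: "(r, p) \<in> (und E) ^^ m" and p2: "(p, v) \<in> und E" by (meson relpow_Suc_E)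
  have "d p \<le> m" using p1 d_le by blast
  moreover have "(r, v) \<in> (und E) ^^ Suc (d p)"
    using d_path[of p] p2 und_V by auto
  then have "d v \<le> Suc (d p)" using d_le by blast
  ultimately have "Suc (d p) = d v" using m by simp
  then show ?thesis using p2 und_V by blast
qed

definition "par v = (SOME p. p \<in> V \<and> (p, v) \<in> und E \<and> Suc (d p) = d v)"

lemma par: "v \<in> V \<Longrightarrow> v \<noteq> r \<Longrightarrow> par v \<in> V \<and> (par v, v) \<in> und E \<and> Suc (d (par v)) = d v"
  unfolding par_def using par_ex by (rule someI_ex) 

definition "phi v = (if (par v, v) \<in> E then (par v, v) else (v, par v))"

lemma phi_E: "v \<in> V \<Longrightarrow> v \<noteq> r \<Longrightarrow> phi v \<in> E"
  using par unfolding phi_def und_def by auto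

lemma phi_inj: "inj_on phi (V - {r})"
proof (rule inj_onI)
  fix v w assume v: "v \<in> V - {r}" and w: "w \<in> V - {r}" and eq: "phi v = phi w"
  have pv: "Suc (d (par v)) = d v" and pw: "Suc (d (par w)) = d w" using par v w by auto
  have "{v, par v} = {w, par w}" using eq unfolding phi_def
    by (auto split: if_splits)
  then have "v = w \<or> (v = par w \<and> par v = w)" by (auto simp: doubleton_eq_iff)
  then show "v = w" using pv pw by auto
qed

lemma phi_onto: "e \<in> E \<Longrightarrow> \<exists>v \<in> V - {r}. e = phi v"
proof -
  assume e: "e \<in> E"
  have "phi ` (V - {r}) \<subseteq> E" using phi_E by blast
  moreover have "card (phi ` (V - {r})) = card E"
    using card_image[OF phi_inj] cardE rV finV by simp
  ultimately have "phi ` (V - {r}) = E" using finE card_subset_eq by blast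
  then show ?thesis using e by auto
qed

lemma T2: "(a, b) \<in> E \<Longrightarrow> (b \<noteq> r \<and> par b = a \<and> d b = Suc (d a)) \<or> (a \<noteq> r \<and> par a = b \<and> d a = Suc (d b))"
proof -
  assume ab: "(a, b) \<in> E"
  then obtain v where v: "v \<in> V - {r}" "(a, b) = phi v" using phi_onto by blast
  have "Suc (d (par v)) = d v" using par v by auto
  then show ?thesis using v unfolding phi_def by (auto split: if_splits)
qed

definition "R = {v. (r, v) \<in> E\<^sup>*}"

lemma rR: "r \<in> R" unfolding R_def by simp

lemma RV: "v \<in> R \<Longrightarrow> v \<in> V"
  unfolding R_def using rV EV by (metis mem_Collect_eq mem_Sigma_iff rtranclE subsetD)

lemma UR: "U \<subseteq> R" using rootR R_def by blast

lemma R_dist: "(r, z) \<in> E ^^ n \<Longrightarrow> d z = n \<and> (0 < n \<longrightarrow> (r, par z) \<in> E ^^ (n - 1) \<and> (par z, z) \<in> E)"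
proof (induction n arbitrary: z)
  case 0 then show ?case using d0 rV by simp
next
  case (Suc n)
  then obtain y where y1: "(r, y) \<in> E ^^ n" and y2: "(y, z) \<in> E" by (meson relpow_Suc_E)
  have IH: "d y = n \<and> (0 < n \<longrightarrow> (r, par y) \<in> E ^^ (n - 1) \<and> (par y, y) \<in> E)" using Suc.IH y1 by blast
  from T2[OF y2] show ?case
  proof
    assume "z \<noteq> r \<and> par z = y \<and> d z = Suc (d y)"
    then show ?thesis using IH y1 y2 by simp
  next
    assume c: "y \<noteq> r \<and> par y = z \<and> d y = Suc (d z)"
    then have "n \<noteq> 0" using y1 by (cases n) auto
    then have "(z, y) \<in> E" using IH c by simp
    then show ?thesis using antisym y2 by blast
  qed
qed

lemma R_d: "z \<in> R \<Longrightarrow> h z = h r + int (d z)"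
proof -
  assume "z \<in> R"
  then obtain n where "(r, z) \<in> E ^^ n" unfolding R_def using rtrancl_power by blast
  then show ?thesis using R_dist hpow by fastforce
qed

lemma R_par: "z \<in> R \<Longrightarrow> z \<noteq> r \<Longrightarrow> par z \<in> R \<and> (par z, z) \<in> E"
proof -
  assume "z \<in> R" "z \<noteq> r"
  then obtain n where n: "(r, z) \<in> E ^^ n" unfolding R_def using rtrancl_power by blast
  with \<open>z \<noteq> r\<close> have "0 < n" by (cases n) auto
  then have "(r, par z) \<in> E ^^ (n - 1) \<and> (par z, z) \<in> E" using R_dist n by blast
  then show ?thesis unfolding R_def using relpow_imp_rtrancl by blast
qed

lemma lemC: "(a, b) \<in> E \<Longrightarrow> d b = Suc (d a) \<Longrightarrow> (b, z) \<in> E ^^ n \<Longrightarrow> z \<in> R \<Longrightarrow> a \<in> R"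
proof (induction n arbitrary: a b)
  case 0
  then have "b \<in> R" by simp
  moreover have "b \<noteq> r" using d0[of r] rV 0(2) by auto
  moreover have "par b = a" using T2[OF 0(1)] 0(2) by auto
  ultimately show ?case using R_par by metis
next
  case (Suc n)
  then obtain y where y1: "(b, y) \<in> E" and y2: "(y, z) \<in> E ^^ n" by (meson relpow_Suc_D2)
  have pb: "par b = a" "b \<noteq> r" using T2[OF Suc(2)] Suc(3) by auto
  have "d y = Suc (d b)"
    using T2[OF y1] pb antisym Suc(2) y1 by auto
  then have "b \<in> R" using Suc.IH y1 y2 Suc(5) by blast
  then show ?case using R_par pb by metis
qed

lemma down: "(a, b) \<in> E \<Longrightarrow> d b = Suc (d a) \<Longrightarrow> a \<in> R"
proof -
  assume ab: "(a, b) \<in> E" and dd: "d b = Suc (d a)"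
  obtain z where "z \<in> U" "(b, z) \<in> E\<^sup>*" using reachU ab by blast
  then obtain n where "(b, z) \<in> E ^^ n" "z \<in> R" using UR rtrancl_power by blast
  then show ?thesis using lemC ab dd by blast
qed

lemma up: "v \<in> V \<Longrightarrow> v \<notin> R \<Longrightarrow> v \<noteq> r \<and> (v, par v) \<in> E \<and> par v \<in> V"
proof -
  assume vV: "v \<in> V" and vR: "v \<notin> R"
  have vr: "v \<noteq> r" using vR rR by blast
  have p: "par v \<in> V" "(par v, v) \<in> und E" "Suc (d (par v)) = d v" using par vV vr by auto
  have "(par v, v) \<notin> E"
  proof
    assume e: "(par v, v) \<in> E"
    then have "par v \<in> R" using down p by simp
    then have "v \<in> R" using e unfolding R_def by (simp add: rtrancl_into_rtrancl)
    then show False using vR by simp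
  qed
  then show ?thesis using p vr unfolding und_def by auto
qed

lemma R_in: "v \<in> R \<Longrightarrow> v \<noteq> r \<Longrightarrow> (v, par v) \<notin> E"
  using R_par antisym by blast

lemma h_le: "v \<in> V \<Longrightarrow> h v \<le> h0"
proof -
  assume vV: "v \<in> V"
  show ?thesis
  proof (cases "\<exists>w. (v, w) \<in> E")
    case True then show ?thesis using out_lt by fastforce
  next
    case False
    show ?thesis
    proof (cases "v \<in> U")
      case True then show ?thesis using hU by simp
    next
      case nU: False
      have "v \<noteq> r"
      proof
        assume "v = r"
        obtain u where "u \<in> U" using U_ne by blast
        then have "(r, u) \<in> E\<^sup>*" "u \<noteq> r" using rootR r_notU by auto
        then obtain w where "(r, w) \<in> E" by (metis converse_rtranclE)
        then show False using False \<open>v = r\<close> by blast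
      qed
      then have "(par v, v) \<in> und E" using par vV by blast
      then have "(par v, v) \<in> E" using False unfolding und_def by auto
      then show ?thesis using sink vV nU False by blast
    qed
  qed
qed

lemma hmin: "v \<in> V \<Longrightarrow> h v \<ge> Min (h ` V)" using finV by simp

lemma funpow_Suc_app: "(f ^^ Suc i) x = (f ^^ i) (f x)"
  by (simp add: funpow_Suc_right del: funpow.simps)

definition "Q = {v \<in> V. v \<noteq> r \<and> (v, r) \<in> E\<^sup>*}"

lemma Q_h: "v \<in> Q \<Longrightarrow> h v < h r" unfolding Q_def using hplus by blast

lemma Q_notR: "v \<in> Q \<Longrightarrow> v \<notin> R" using Q_h R_d by fastforce

lemma Q_step: "v \<in> Q \<Longrightarrow> (v, par v) \<in> E \<and> (par v = r \<or> par v \<in> Q)"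
proof -
  assume vQ: "v \<in> Q"
  then have vV: "v \<in> V" and vr: "v \<noteq> r" and vs: "(v, r) \<in> E\<^sup>*" unfolding Q_def by auto
  have vR: "v \<notin> R" using Q_notR vQ by blast
  have u: "(v, par v) \<in> E" "par v \<in> V" using up vV vR by auto
  obtain y where y1: "(v, y) \<in> E" and y2: "(y, r) \<in> E\<^sup>*" using vs vr by (metis converse_rtranclE)
  have "par v = y"
    using T2[OF y1] down y1 vR by auto
  then show ?thesis using u y2 unfolding Q_def by auto
qed

lemma Q_chain: "v \<in> Q \<Longrightarrow> n = nat (h r - h v) \<Longrightarrow> (\<forall>i<n. (par ^^ i) v \<in> Q) \<and> (par ^^ n) v = r"
proof (induction n arbitrary: v)
  case 0 then show ?case using Q_h by fastforce
next
  case (Suc n)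
  have st: "(v, par v) \<in> E" "par v = r \<or> par v \<in> Q" using Q_step Suc.prems by auto
  have hp: "h (par v) = h v + 1" using hE st by simp
  show ?case
  proof (cases "par v = r")
    case True
    then have "n = 0" using hp Suc.prems by simp
    then show ?thesis using True Suc.prems by (simp del: Suc.prems(2) add: Suc.prems(2)[symmetric])
  next
    case False
    then have pQ: "par v \<in> Q" using st by simp
    have "n = nat (h r - h (par v))" using hp Suc.prems by simp
    then have IH: "(\<forall>i<n. (par ^^ i) (par v) \<in> Q) \<and> (par ^^ n) (par v) = r" using Suc.IH pQ by blast
    have "\<forall>i<Suc n. (par ^^ i) v \<in> Q"
    proof (intro allI impI)
      fix i assume "i < Suc n"
      then show "(par ^^ i) v \<in> Q" using IH Suc.prems
        by (cases i) (auto simp: funpow_Suc_app simp del: funpow.simps)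
    qed
    then show ?thesis using IH by (simp add: funpow_Suc_app del: funpow.simps)
  qed
qed

definition "H = V - R - Q"

lemma H_step: "v \<in> H \<Longrightarrow> (v, par v) \<in> E \<and> h (par v) = h v + 1 \<and> (par v \<in> H \<or> par v \<in> U)"
proof -
  assume vH: "v \<in> H"
  then have vV: "v \<in> V" and vR: "v \<notin> R" and vQ: "v \<notin> Q" unfolding H_def by auto
  have u: "(v, par v) \<in> E" "par v \<in> V" "v \<noteq> r" using up vV vR by auto
  have hp: "h (par v) = h v + 1" using hE u by simp
  have pr: "par v \<noteq> r" using u vQ vV unfolding Q_def by auto
  have pQ: "par v \<notin> Q"
  proof
    assume "par v \<in> Q"
    then have "(v, r) \<in> E\<^sup>*" using u unfolding Q_def by (auto intro: converse_rtrancl_into_rtrancl)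
    then show False using vQ vV u unfolding Q_def by auto
  qed
  show ?thesis
  proof (cases "par v \<in> R")
    case False then show ?thesis using u hp pQ unfolding H_def by auto
  next
    case True
    then have pp: "par (par v) \<in> R" "(par (par v), par v) \<in> E" using R_par pr by auto
    have ne: "par (par v) \<noteq> v" using pp vR by auto
    have "{v, par (par v)} \<subseteq> {x \<in> V. (x, par v) \<in> E}" using pp u vV RV by auto
    then have "card {v, par (par v)} \<le> indeg V E (par v)" unfolding indeg_def
      using finV by (intro card_mono) auto
    then have "indeg V E (par v) \<ge> 2" using ne by simp
    then have "par v \<in> U" using u unfolding branch_verts_def by simp
    then show ?thesis using u hp by simp
  qed
qed

lemma H_lt: "v \<in> H \<Longrightarrow> h v < h0" using H_step out_lt by blast

lemma H_chain: "v \<in> H \<Longrightarrow> n = nat (h0 - h v) \<Longrightarrow> (\<forall>i<n. (par ^^ i) v \<in> H) \<and> (par ^^ n) v \<in> U"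
proof (induction n arbitrary: v)
  case 0 then show ?case using H_lt by fastforce
next
  case (Suc n)
  have st: "(v, par v) \<in> E" "h (par v) = h v + 1" "par v \<in> H \<or> par v \<in> U" using H_step Suc.prems by auto
  show ?case
  proof (cases "par v \<in> U")
    case True
    then have "n = 0" using st hU Suc.prems by simp
    then show ?thesis using True Suc.prems by (simp del: Suc.prems(2) add: Suc.prems(2)[symmetric])
  next
    case False
    then have pH: "par v \<in> H" using st by simp
    have "n = nat (h0 - h (par v))" using st Suc.prems by simp
    then have IH: "(\<forall>i<n. (par ^^ i) (par v) \<in> H) \<and> (par ^^ n) (par v) \<in> U" using Suc.IH pH by blast
    have "\<forall>i<Suc n. (par ^^ i) v \<in> H"
    proof (intro allI impI)
      fix i assume "i < Suc n"
      then show "(par ^^ i) v \<in> H" using IH Suc.prems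
        by (cases i) (auto simp: funpow_Suc_app simp del: funpow.simps)
    qed
    then show ?thesis using IH by (simp add: funpow_Suc_app del: funpow.simps)
  qed
qed

lemma chain_inj: "v \<in> V \<Longrightarrow> v' \<in> V \<Longrightarrow> (\<forall>i<n. (par ^^ i) v \<notin> R \<and> (par ^^ i) v' \<notin> R)
  \<Longrightarrow> (\<forall>i. 1 \<le> i \<and> i \<le> n \<longrightarrow> (par ^^ i) v \<notin> U) \<Longrightarrow> (par ^^ n) v = (par ^^ n) v' \<Longrightarrow> v = v'"
proof (induction n arbitrary: v v')
  case 0 then show ?case by simp
next
  case (Suc n)
  have vR: "v \<notin> R" "v' \<notin> R" using Suc.prems(3) by (metis funpow_0 zero_less_Suc)+
  have u: "(v, par v) \<in> E" "par v \<in> V" "(v', par v') \<in> E" "par v' \<in> V" using up vR Suc.prems(1,2) by auto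
  have "par v = par v'"
  proof (rule Suc.IH)
    show "par v \<in> V" "par v' \<in> V" using u by auto
    show "\<forall>i<n. (par ^^ i) (par v) \<notin> R \<and> (par ^^ i) (par v') \<notin> R"
      using Suc.prems(3) by (auto simp: funpow_Suc_app[symmetric] simp del: funpow.simps)
    show "\<forall>i. 1 \<le> i \<and> i \<le> n \<longrightarrow> (par ^^ i) (par v) \<notin> U"
      using Suc.prems(4) by (auto simp: funpow_Suc_app[symmetric] simp del: funpow.simps)
    show "(par ^^ n) (par v) = (par ^^ n) (par v')"
      using Suc.prems(5) by (simp add: funpow_Suc_app[symmetric] del: funpow.simps)
  qed
  have "par v \<notin> U" using Suc.prems(4)[rule_format, of 1] by simp
  then have "indeg V E (par v) < 2" using u unfolding branch_verts_def by auto
  moreover have "{v, v'} \<subseteq> {x \<in> V. (x, par v) \<in> E}" using u Suc.prems(1,2) \<open>par v = par v'\<close> by auto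
  then have "card {v, v'} \<le> indeg V E (par v)" unfolding indeg_def
    using finV by (intro card_mono) auto
  ultimately show ?case by (cases "v = v'") auto
qed

definition "idx = (SOME g. bij_betw g V {0..<card V})"
lemma idx_bij: "bij_betw idx V {0..<card V}"
  unfolding idx_def using ex_bij_betw_finite_nat[OF finV] by (rule someI_ex)
lemma idx_lt: "v \<in> V \<Longrightarrow> idx v < card V" using idx_bij by (auto simp: bij_betw_def)
lemma idx_inj: "v \<in> V \<Longrightarrow> w \<in> V \<Longrightarrow> idx v = idx w \<Longrightarrow> v = w"
  using idx_bij by (auto simp: bij_betw_def inj_on_def)
lemma L_pos: "0 < card V" using finV rV card_gt_0_iff by blast

definition "hm = Min (h ` V)"
definition "D = nat (h r - hm)"
definition "K = nat (h0 - hm)"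
definition "pw v = pwn par idx (d v) v"
definition "W v = replicate D 0 @ pw v"

lemma pw_R_aux: "\<forall>v \<in> R. d v = n \<longrightarrow> length (pwn par idx n v) = n \<and> set (pwn par idx n v) \<subseteq> {..<card V}"
proof (induction n)
  case 0 then show ?case by simp
next
  case (Suc n)
  show ?case
  proof (intro ballI impI)
    fix v assume vR: "v \<in> R" and dv: "d v = Suc n"
    have vr: "v \<noteq> r" using dv d0 RV vR by fastforce
    have pR: "par v \<in> R" using R_par vR vr by blast
    have "Suc (d (par v)) = d v" using par RV vR vr by blast
    then have "d (par v) = n" using dv by simp
    note * = Suc.IH[rule_format, OF pR this]
    then show "length (pwn par idx (Suc n) v) = Suc n \<and> set (pwn par idx (Suc n) v) \<subseteq> {..<card V}"
      using * idx_lt RV vR \<open>d (par v) = n\<close> by auto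
  qed
qed

lemma pw_len: "v \<in> R \<Longrightarrow> length (pw v) = d v" using pw_R_aux unfolding pw_def by blast
lemma pw_set: "v \<in> R \<Longrightarrow> set (pw v) \<subseteq> {..<card V}" using pw_R_aux unfolding pw_def by blast
lemma pw_step: "v \<in> R \<Longrightarrow> v \<noteq> r \<Longrightarrow> pw v = pw (par v) @ [idx v]"
proof -
  assume "v \<in> R" "v \<noteq> r"
  then have "d v = Suc (d (par v))" using par RV by metis
  then show ?thesis unfolding pw_def by simp
qed
lemma pw_r: "pw r = []"
proof -
  have "d r = 0" using d0 rV by simp
  then show ?thesis unfolding pw_def by simp
qed

lemma pw_inj: "a \<in> R \<Longrightarrow> b \<in> R \<Longrightarrow> pw a = pw b \<Longrightarrow> a = b"
proof -
  assume aR: "a \<in> R" and bR: "b \<in> R" and eq: "pw a = pw b"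
  then have dd: "d a = d b" using pw_len by metis
  show "a = b"
  proof (cases "a = r")
    case True then show ?thesis using dd d0 RV aR bR by metis
  next
    case False
    then have "b \<noteq> r" using dd d0 RV aR bR by metis
    then have "idx a = idx b" using eq pw_step aR bR False by fastforce
    then show ?thesis using idx_inj RV aR bR by blast
  qed
qed

lemma hm_le: "v \<in> V \<Longrightarrow> hm \<le> h v" unfolding hm_def using hmin by blast

lemma W_len: "v \<in> R \<Longrightarrow> length (W v) = nat (h v - hm)"
  unfolding W_def D_def using pw_len R_d hm_le rV by fastforce
lemma W_set: "v \<in> R \<Longrightarrow> set (W v) \<subseteq> {..<card V}"
  unfolding W_def using pw_set L_pos by auto

definition "f v = (if v \<in> R then (W v, 0, 0) else if v \<in> Q then (replicate (nat (h v - hm)) 0, 0, 0)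
   else (W ((par ^^ nat (h0 - h v)) v), idx ((par ^^ (nat (h0 - h v) - 1)) v), nat (h0 - h v)))"

lemma K_pos: "1 \<le> K"
proof -
  obtain u where "u \<in> U" using U_ne by blast
  then have "(r, u) \<in> E\<^sup>*" "u \<noteq> r" using rootR r_notU by auto
  then obtain w where "(r, w) \<in> E" by (metis converse_rtranclE)
  then have "h r < h0" using out_lt by blast
  then show ?thesis unfolding K_def using hm_le[OF rV] by simp
qed

lemma HV: "v \<in> H \<Longrightarrow> v \<in> V" unfolding H_def by simp
lemma QV: "v \<in> Q \<Longrightarrow> v \<in> V" unfolding Q_def by simp
lemma H_notU: "v \<in> H \<Longrightarrow> v \<notin> U" unfolding H_def using UR by auto
lemma Q_notU: "v \<in> Q \<Longrightarrow> v \<notin> U" using Q_h hU h_le[OF rV] UR Q_notR by fastforce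
lemma classes: "v \<in> V \<Longrightarrow> v \<in> R \<or> v \<in> Q \<or> v \<in> H" unfolding H_def by auto

lemma f_vert: "v \<in> V \<Longrightarrow> f v \<in> Tk_verts K (card V)"
proof -
  assume vV: "v \<in> V"
  consider "v \<in> R" | "v \<in> Q" "v \<notin> R" | "v \<in> H" using classes vV by blast
  then show ?thesis
  proof cases
    case 1
    have "h v \<le> h0" using h_le RV 1 by blast
    then show ?thesis unfolding f_def using W_len W_set 1 K_def
      by (auto intro!: Tk_B)
  next
    case 2
    have "h v \<le> h0" using h_le vV by blast
    then show ?thesis unfolding f_def using K_def L_pos 2
      by (auto intro!: Tk_B)
  next
    case 3
    define m where "m = nat (h0 - h v)"
    have hc: "(\<forall>i<m. (par ^^ i) v \<in> H) \<and> (par ^^ m) v \<in> U" using H_chain 3 m_def by blast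
    have m1: "1 \<le> m" using H_lt[OF 3] m_def by simp
    have nR: "v \<notin> R" "v \<notin> Q" using 3 unfolding H_def by auto
    have uR: "(par ^^ m) v \<in> R" using hc UR by blast
    have "length (W ((par ^^ m) v)) = K" using W_len uR hU hc K_def by simp
    moreover have "set (W ((par ^^ m) v)) \<subseteq> {..<card V}" using W_set uR by blast
    moreover have "idx ((par ^^ (m - 1)) v) < card V" using hc m1 idx_lt HV by simp
    moreover have "m \<le> K" using m_def K_def hm_le[OF vV] by simp
    ultimately show ?thesis unfolding f_def using nR m1 m_def
      by (auto intro!: Tk_S)
  qed
qed

lemma fR: "v \<in> R \<Longrightarrow> f v = (W v, 0, 0)" unfolding f_def by simp
lemma fQ: "v \<in> Q \<Longrightarrow> f v = (replicate (nat (h v - hm)) 0, 0, 0)" unfolding f_def using Q_notR by simp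
lemma fH: "v \<in> H \<Longrightarrow> f v = (W ((par ^^ nat (h0 - h v)) v), idx ((par ^^ (nat (h0 - h v) - 1)) v), nat (h0 - h v))"
  unfolding f_def H_def by simp

lemma f_edge: "(a, b) \<in> E \<Longrightarrow> (f a, f b) \<in> Tk_edges K (card V)"
proof -
  assume ab: "(a, b) \<in> E"
  have aV: "a \<in> V" and bV: "b \<in> V" using ab EV by auto
  from T2[OF ab] show ?thesis
  proof
    assume c: "b \<noteq> r \<and> par b = a \<and> d b = Suc (d a)"
    have aR: "a \<in> R" using down ab c by blast
    have bR: "b \<in> R" using aR ab unfolding R_def by (simp add: rtrancl_into_rtrancl)
    have "W b = W a @ [idx b]" unfolding W_def using pw_step bR c by simp
    moreover have "length (W a) < K" using W_len aR out_lt ab K_def hm_le[OF aV] by fastforce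
    ultimately show ?thesis using fR aR bR W_set idx_lt bV by (auto intro!: Te1)
  next
    assume c: "a \<noteq> r \<and> par a = b \<and> d a = Suc (d b)"
    have aR: "a \<notin> R" using R_in c ab by blast
    have hb: "h b = h a + 1" using hE ab by simp
    consider "a \<in> Q" | "a \<in> H" using classes aV aR by blast
    then show ?thesis
    proof cases
      case 1
      have st: "b = r \<or> b \<in> Q" using Q_step 1 c by blast
      have ha: "h a < h0" using out_lt ab by blast
      define n where "n = nat (h a - hm)"
      have fa: "f a = (replicate n 0, 0, 0)" using fQ 1 n_def by simp
      have fb: "f b = (replicate (Suc n) 0, 0, 0)"
      proof (cases "b = r")
        case True
        then have "f b = (replicate D 0, 0, 0)" using fR rR pw_r W_def by simp
        moreover have "D = Suc n" unfolding D_def n_def using True hb hm_le[OF aV] by simp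
        ultimately show ?thesis by simp
      next
        case False
        then have "b \<in> Q" using st by simp
        then show ?thesis using fQ n_def hb hm_le[OF aV] by (simp add: Suc_nat_eq_nat_zadd1 add.commute)
      qed
      have "n < K" unfolding n_def K_def using ha hm_le[OF aV] by simp
      moreover have "set (replicate n (0::nat)) \<subseteq> {..<card V}" using L_pos by (auto simp: set_replicate_conv_if)
      ultimately show ?thesis using fa fb L_pos Te1[of "replicate n 0" K "card V" 0] rep_snoc by simp
    next
      case 2
      define m where "m = nat (h0 - h a)"
      have hc: "(\<forall>i<m. (par ^^ i) a \<in> H) \<and> (par ^^ m) a \<in> U" using H_chain 2 m_def by blast
      have m1: "1 \<le> m" using H_lt[OF 2] m_def by simp
      have uR: "(par ^^ m) a \<in> R" using hc UR by blast
      have lenW: "length (W ((par ^^ m) a)) = K" using W_len uR hU hc K_def by simp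
      have setW: "set (W ((par ^^ m) a)) \<subseteq> {..<card V}" using W_set uR by blast
      have ix: "idx ((par ^^ (m - 1)) a) < card V" using hc m1 idx_lt HV by simp
      have mK: "m \<le> K" using m_def K_def hm_le[OF aV] by simp
      have fa: "f a = (W ((par ^^ m) a), idx ((par ^^ (m - 1)) a), m)" using fH 2 m_def by simp
      have st: "b \<in> H \<or> b \<in> U" using H_step 2 c by blast
      show ?thesis
      proof (cases "b \<in> U")
        case True
        then have "m = 1" using hU hb m_def by simp
        then have "f a = (W b, idx a, 1)" using fa c by simp
        moreover have "f b = (W b, 0, 0)" using fR UR True by blast
        ultimately show ?thesis using Te3 lenW setW \<open>m = 1\<close> c idx_lt aV by auto
      next
        case False
        then have bH: "b \<in> H" using st by simp
        have mb: "nat (h0 - h b) = m - 1" using hb m_def by simp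
        have m2: "2 \<le> m" using H_lt[OF bH] mb by simp
        obtain m' where mm: "m = Suc (Suc m')" using m2 by (metis add_2_eq_Suc le_Suc_ex)
        have e1: "(par ^^ (m - 1)) b = (par ^^ m) a"
          using c mm funpow_Suc_app[where f=par and i="Suc m'" and x=a] by simp
        have e2: "(par ^^ (m - 1 - 1)) b = (par ^^ (m - 1)) a"
          using c mm funpow_Suc_app[where f=par and i="m'" and x=a] by simp
        have fb: "f b = (W ((par ^^ m) a), idx ((par ^^ (m - 1)) a), m - 1)"
          using fH[OF bH] mb e1 e2 by simp
        have "Suc (m - 1) = m" using m1 by simp
        then show ?thesis using fa fb Te2[of "W ((par ^^ m) a)" K "card V" "idx ((par ^^ (m - 1)) a)" "m - 1"]
          lenW setW ix mK m2 by simp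
      qed
    qed
  qed
qed

lemma R_len: "v \<in> R \<Longrightarrow> D \<le> length (W v)" unfolding W_def by simp
lemma Q_len: "v \<in> Q \<Longrightarrow> nat (h v - hm) < D"
  unfolding D_def using Q_h hm_le QV by fastforce

lemma f_inj: "inj_on f V"
proof (rule inj_onI)
  fix a b assume aV: "a \<in> V" and bV: "b \<in> V" and eq: "f a = f b"
  have Hthird: "v \<in> H \<Longrightarrow> 1 \<le> snd (snd (f v))" for v using fH H_lt by fastforce
  have nH: "v \<in> R \<or> v \<in> Q \<Longrightarrow> snd (snd (f v)) = 0" for v using fR fQ by auto
  have RQ: "x \<in> R \<Longrightarrow> y \<in> Q \<Longrightarrow> f x \<noteq> f y" for x y
    using fR fQ R_len Q_len by fastforce
  have RR: "x \<in> R \<Longrightarrow> y \<in> R \<Longrightarrow> f x = f y \<Longrightarrow> x = y" for x y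
    using fR pw_inj unfolding W_def by auto
  have QQ: "x \<in> Q \<Longrightarrow> y \<in> Q \<Longrightarrow> f x = f y \<Longrightarrow> x = y" for x y
  proof -
    assume xQ: "x \<in> Q" and yQ: "y \<in> Q" and e: "f x = f y"
    have "nat (h x - hm) = nat (h y - hm)" using e fQ xQ yQ by simp
    moreover have "hm \<le> h x" "hm \<le> h y" using hm_le QV xQ yQ by auto
    ultimately have hxy: "h x = h y" by simp
    define n where "n = nat (h r - h x)"
    have cx: "(\<forall>i<n. (par ^^ i) x \<in> Q) \<and> (par ^^ n) x = r" using Q_chain xQ n_def by blast
    have cy: "(\<forall>i<n. (par ^^ i) y \<in> Q) \<and> (par ^^ n) y = r" using Q_chain yQ n_def hxy by simp
    show "x = y"
    proof (rule chain_inj[of x y n])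
      show "x \<in> V" "y \<in> V" using xQ yQ QV by auto
      show "\<forall>i<n. (par ^^ i) x \<notin> R \<and> (par ^^ i) y \<notin> R" using cx cy Q_notR by blast
      show "\<forall>i. 1 \<le> i \<and> i \<le> n \<longrightarrow> (par ^^ i) x \<notin> U"
      proof (intro allI impI)
        fix i assume "1 \<le> i \<and> i \<le> n"
        then have "i < n \<or> i = n" by auto
        then show "(par ^^ i) x \<notin> U" using cx Q_notU r_notU by auto
      qed
      show "(par ^^ n) x = (par ^^ n) y" using cx cy by simp
    qed
  qed
  have HH: "x \<in> H \<Longrightarrow> y \<in> H \<Longrightarrow> f x = f y \<Longrightarrow> x = y" for x y
  proof -
    assume xH: "x \<in> H" and yH: "y \<in> H" and e: "f x = f y"
    define m where "m = nat (h0 - h x)"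
    have "nat (h0 - h x) = nat (h0 - h y)" using e fH xH yH by simp
    moreover have "h x < h0" "h y < h0" using H_lt xH yH by auto
    ultimately have hxy: "h x = h y" by simp
    have cx: "(\<forall>i<m. (par ^^ i) x \<in> H) \<and> (par ^^ m) x \<in> U" using H_chain xH m_def by blast
    have cy: "(\<forall>i<m. (par ^^ i) y \<in> H) \<and> (par ^^ m) y \<in> U" using H_chain yH m_def hxy by simp
    have m1: "1 \<le> m" using H_lt[OF xH] m_def by simp
    have "idx ((par ^^ (m - 1)) x) = idx ((par ^^ (m - 1)) y)" using e fH xH yH m_def hxy by simp
    then have yy: "(par ^^ (m - 1)) x = (par ^^ (m - 1)) y" using idx_inj cx cy m1 HV
      by (metis diff_less zero_less_one less_le_trans)
    show "x = y"
    proof (rule chain_inj[of x y "m - 1"])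
      show "x \<in> V" "y \<in> V" using xH yH HV by auto
      show "\<forall>i<m - 1. (par ^^ i) x \<notin> R \<and> (par ^^ i) y \<notin> R" using cx cy unfolding H_def by auto
      show "\<forall>i. 1 \<le> i \<and> i \<le> m - 1 \<longrightarrow> (par ^^ i) x \<notin> U"
        using cx H_notU m1 by (metis diff_less le_less_trans less_le_trans zero_less_one)
      show "(par ^^ (m - 1)) x = (par ^^ (m - 1)) y" using yy .
    qed
  qed
  consider "a \<in> R" | "a \<in> Q" "a \<notin> R" | "a \<in> H" using classes aV by blast
  then show "a = b"
  proof cases
    case 1
    consider "b \<in> R" | "b \<in> Q" "b \<notin> R" | "b \<in> H" using classes bV by blast
    then show ?thesis
    proof cases
      case 1 then show ?thesis using RR \<open>a \<in> R\<close> eq by blast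
    next
      case 2 then show ?thesis using RQ \<open>a \<in> R\<close> eq by blast
    next
      case 3 then show ?thesis using Hthird nH \<open>a \<in> R\<close> eq by fastforce
    qed
  next
    case 2
    consider "b \<in> R" | "b \<in> Q" "b \<notin> R" | "b \<in> H" using classes bV by blast
    then show ?thesis
    proof cases
      case 1 then show ?thesis using RQ \<open>a \<in> Q\<close> eq by metis
    next
      case 2 then show ?thesis using QQ \<open>a \<in> Q\<close> eq by blast
    next
      case 3 then show ?thesis using Hthird nH \<open>a \<in> Q\<close> eq by fastforce
    qed
  next
    case 3
    consider "b \<in> R \<or> b \<in> Q" | "b \<in> H" using classes bV by blast
    then show ?thesis
    proof cases
      case 1 then show ?thesis using Hthird nH \<open>a \<in> H\<close> eq by fastforce
    next
      case 2 then show ?thesis using HH \<open>a \<in> H\<close> eq by blast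
    qed
  qed
qed

lemma main: "\<exists>k \<ge> 1. \<exists>l \<ge> 1. subgraph_iso V E (Tk_verts k l) (Tk_edges k l)"
proof -
  have "subgraph_iso V E (Tk_verts K (card V)) (Tk_edges K (card V))"
    unfolding subgraph_iso_def using f_inj f_vert f_edge by blast
  then show ?thesis using K_pos L_pos by (metis One_nat_def Suc_leI)
qed

end


theorem lemma3p1:
  fixes V :: "'a set" and E :: "('a \<times> 'a) set"
  assumes "oriented_tree V E"
    and "grounded V E"
    and "out_arborescence (min_subtree_verts V E (branch_verts V E))
           (induced (min_subtree_verts V E (branch_verts V E)) E)"
    and "card (branch_verts V E) \<ge> 2"
    and "\<forall>v. is_leaf V E v \<longrightarrow> indeg V E v \<noteq> 1"
  shows "\<exists>k \<ge> 1. \<exists>l \<ge> 1. subgraph_iso V E (Tk_verts k l) (Tk_edges k l)"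
proof -
  define S where "S = min_subtree_verts V E (branch_verts V E)"
  have EV: "E \<subseteq> V \<times> V" using assms(1) by (simp add: oriented_tree_def)
  have ie: "induced V E = E" using EV unfolding induced_def by blast
  have "und_connected V E" using assms(1) unfolding oriented_tree_def by blast
  then have Vin: "V \<in> {W. branch_verts V E \<subseteq> W \<and> W \<subseteq> V \<and> und_connected W (induced W E)}"
    using ie unfolding branch_verts_def by simp
  have SV: "S \<subseteq> V" unfolding S_def min_subtree_verts_def using Vin by blast
  have US: "branch_verts V E \<subseteq> S" unfolding S_def min_subtree_verts_def by blast
  obtain r where rS: "r \<in> S" and rr: "\<forall>v \<in> S. (r, v) \<in> (induced S E)\<^sup>*"
    using assms(3) unfolding S_def out_arborescence_def by blast
  have "induced S E \<subseteq> E" by (auto simp: induced_def)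
  then have rootR: "\<forall>u \<in> branch_verts V E. (r, u) \<in> E\<^sup>*" using rr US rtrancl_mono by blast
  obtain h where hf: "height_fun E h" and gr: "\<forall>u \<in> branch_verts V E. \<forall>w \<in> branch_verts V E. h u = h w"
    using assms(2) unfolding grounded_def by blast
  have rV: "r \<in> V" using rS SV by blast
  interpret ctx V E r h
    by (rule ctx.intro; (rule assms hf gr rootR rV)?)
  show ?thesis by (rule main)
qed

end
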